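(* Let $(\alpha_{\mathrm p},\alpha_{\mathrm s},\beta_{\mathrm p},\beta_{\mathrm s})\in\mathcal{A}(K,L,T)$ and write $\alpha=(\alpha_{\mathrm p}\mid\alpha_{\mathrm s})=(\alpha_1,\ldots,\alpha_{K+T})$, $\beta=(\beta_{\mathrm p}\mid\beta_{\mathrm s})=(\beta_1,\ldots,\beta_{L+T})$. Then for all $1\le i\le K+T$ and $1\le j\le L+T$, $|(\alpha_i+\operatorname{Set}(\beta_{\mathrm p}))\cap(\operatorname{Set}(\alpha_{\mathrm p})+\beta_j)|\le1$.
   Context: A degree table with parameters $K,L,T$ is a tuple $(\alpha_{\mathrm p},\alpha_{\mathrm s},\beta_{\mathrm p},\beta_{\mathrm s})$ of nonnegative integer vectors of lengths $K,T,L,T$ such that, with $\alpha,\beta$ the concatenations: entries of $\alpha$ are distinct; entries of $\beta$ are distinct; every $n\in\operatorname{Set}(\alpha_{\mathrm p})+\operatorname{Set}(\beta_{\mathrm p})$ has a unique representation $n=i+j$ with $i\in\operatorname{Set}(\alpha)$, $j\in\operatorname{Set}(\beta)$. $\mathcal{A}(K,L,T)$ is the set of degree tables; $\operatorname{Set}(v)$ is the set of entries of $v$, $x+B=\{x+b:b\in B\}$. *)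

theory Defs
  imports Main
begin

definition setsum_nat :: "nat set \<Rightarrow> nat set \<Rightarrow> nat set" where
  "setsum_nat A B = {a + b | a b. a \<in> A \<and> b \<in> B}"

definition degree_table ::
  "nat \<Rightarrow> nat \<Rightarrow> nat \<Rightarrow> nat list \<Rightarrow> nat list \<Rightarrow> nat list \<Rightarrow> nat list \<Rightarrow> bool" where
  "degree_table K L T ap as bp bs \<longleftrightarrow>
     length ap = K \<and> length as = T \<and> length bp = L \<and> length bs = T \<and>
     distinct (ap @ as) \<and> distinct (bp @ bs) \<and>
     (\<forall>n \<in> setsum_nat (set ap) (set bp).
        \<exists>!p. p \<in> set (ap @ as) \<times> set (bp @ bs) \<and> n = fst p + snd p)"

end

theory Submission
  imports Defs
begin

theorem lemma10:
  fixes K L T :: nat and ap as bp bs :: "nat list"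
  assumes "degree_table K L T ap as bp bs"
    and "1 \<le> i" "i \<le> K + T" "1 \<le> j" "j \<le> L + T"
  shows "card (((\<lambda>b. (ap @ as) ! (i - 1) + b) ` set bp) \<inter>
               ((\<lambda>a. a + (bp @ bs) ! (j - 1)) ` set ap)) \<le> 1"
proof -
  define x where "x = (ap @ as) ! (i - 1)"
  define y where "y = (bp @ bs) ! (j - 1)"
  have U: "\<forall>n \<in> setsum_nat (set ap) (set bp).
        \<exists>!p. p \<in> set (ap @ as) \<times> set (bp @ bs) \<and> n = fst p + snd p"
    using assms(1) unfolding degree_table_def by auto
  let ?S = "((\<lambda>b. x + b) ` set bp) \<inter> ((\<lambda>a. a + y) ` set ap)"
  have "\<forall>n1\<in>?S. \<forall>n2\<in>?S. n1 = n2"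
  proof (intro ballI)
    fix n1 n2 assume "n1 \<in> ?S" "n2 \<in> ?S"
    then obtain a1 b1 a2 b2 where ab: "a1 \<in> set ap" "b1 \<in> set bp" "n1 = x + b1" "n1 = a1 + y"
      "a2 \<in> set ap" "b2 \<in> set bp" "n2 = x + b2" "n2 = a2 + y" by auto
    have h1: "x + b1 = a1 + y" using ab(3,4) by (rule subst)
    have h2: "x + b2 = a2 + y" using ab(7,8) by (rule subst)
    have eq: "a1 + b2 = a2 + b1" using h1 h2 by linarith
    have "a1 + b2 \<in> setsum_nat (set ap) (set bp)" unfolding setsum_nat_def
      using ab(1,6) by blast
    with U have E: "\<exists>!p. p \<in> set (ap @ as) \<times> set (bp @ bs) \<and> a1 + b2 = fst p + snd p" by blast
    have P1: "(a1, b2) \<in> set (ap @ as) \<times> set (bp @ bs)" using ab(1,2,5,6) by auto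
    have P2: "(a2, b1) \<in> set (ap @ as) \<times> set (bp @ bs)" using ab(1,2,5,6) by auto
    from E obtain p where "\<forall>q. q \<in> set (ap @ as) \<times> set (bp @ bs) \<and> a1 + b2 = fst q + snd q \<longrightarrow> q = p"
      by blast
    then have "(a1, b2) = p" "(a2, b1) = p" using P1 P2 eq by auto
    then have "(a1, b2) = (a2, b1)" by simp
    then have "a1 = a2" by simp
    then show "n1 = n2" using ab(4,8) by simp
  qed
  moreover have "finite ?S" by blast
  ultimately have "card ?S \<le> 1"
    by (simp only: card_le_Suc0_iff_eq One_nat_def)
  then show ?thesis unfolding x_def y_def by simp
qed

end
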